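(* Let $P_0(k)=C_{p0}T_{p0}^k-C_mT_m^k$ with $C_{p0},C_m>0$ and $0<T_{p0}<T_m<1$, and let $C_{pi}>0$ and $0<T_{pi}<T_m$, $i=1,\dots,N$. Then there exist positive numbers $C_{m0},\dots,C_{mN}$ with $\sum_{i=0}^N C_{mi}=C_m$ such that the functions $L_i(k)=C_{pi}T_{pi}^k-C_{mi}T_m^k$, $i=0,\dots,N$, all attain their minimum at one common point $k_1$ (i.e. $L_i'(k_1)=0$ for all $i$), and $P_0(k)+\sum_{i=1}^N C_{pi}T_{pi}^k=\sum_{i=0}^N L_i(k)$ for all real $k$. *)

theory Defs
  imports Complex_Main
begin

end

theory Submission
  imports Defs
begin

lemma deriv_L:
  fixes C a b c :: real
  assumes "a > 0" "b > 0"
  shows "((\<lambda>k. C * a powr k - c * b powr k) has_real_derivative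
           (C * ln a * a powr x - c * ln b * b powr x)) (at x)"
proof -
  have e: "\<And>k. C * a powr k - c * b powr k = C * exp (k * ln a) - c * exp (k * ln b)"
    using assms by (simp add: powr_def mult.commute)
  have "((\<lambda>k. C * exp (k * ln a) - c * exp (k * ln b)) has_real_derivative
           (C * (exp (x * ln a) * ln a) - c * (exp (x * ln b) * ln b))) (at x)"
    by (auto intro!: derivative_eq_intros)
  then show ?thesis using assms unfolding e by (simp add: powr_def algebra_simps)
qed

lemma L_min:
  fixes C a b k1 :: real
  assumes C: "C > 0" and a: "0 < a" "a < b" and b: "b < 1"
  defines "c \<equiv> C * ln a * a powr k1 / (ln b * b powr k1)"
  shows "((\<lambda>k. C * a powr k - c * b powr k) has_real_derivative 0) (at k1)"
    and "\<forall>k. C * a powr k1 - c * b powr k1 \<le> C * a powr k - c * b powr k"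
proof -
  have b0: "b > 0" using a by simp
  have lb: "ln b < 0" using b b0 by simp
  have la: "ln a < 0" using a b by simp
  let ?D = "\<lambda>x. C * ln a * a powr x - c * ln b * b powr x"
  have D: "\<And>x. ?D x = C * ln a * b powr x * ((a/b) powr x - (a/b) powr k1)"
  proof -
    fix x
    have "c * ln b * b powr x = C * ln a * a powr k1 * b powr x / b powr k1"
      unfolding c_def using lb b0 by (simp add: field_simps)
    also have "\<dots> = C * ln a * b powr x * (a/b) powr k1"
      using a b0 by (simp add: powr_divide field_simps)
    finally show "?D x = C * ln a * b powr x * ((a/b) powr x - (a/b) powr k1)"
      using a b0 by (simp add: powr_divide field_simps)
  qed
  have r: "0 < a/b" "a/b < 1" using a b0 by auto
  show "((\<lambda>k. C * a powr k - c * b powr k) has_real_derivative 0) (at k1)"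
    using deriv_L[OF a(1) b0, of C c k1] D[of k1] by simp
  have neg: "C * ln a * b powr x < 0" for x using C la b0 by (simp add: mult_pos_neg mult_neg_pos)
  show "\<forall>k. C * a powr k1 - c * b powr k1 \<le> C * a powr k - c * b powr k"
  proof
    fix k
    show "C * a powr k1 - c * b powr k1 \<le> C * a powr k - c * b powr k"
    proof (cases "k \<le> k1")
      case True
      show ?thesis
      proof (rule DERIV_nonpos_imp_nonincreasing[OF True])
        fix x assume "k \<le> x" "x \<le> k1"
        have "(a/b) powr k1 \<le> (a/b) powr x" using r \<open>x \<le> k1\<close> by (simp add: powr_mono')
        hence "?D x \<le> 0" unfolding D using neg[of x] by (metis less_imp_le mult_nonpos_nonneg diff_ge_0_iff_ge)
        thus "\<exists>y. ((\<lambda>k. C * a powr k - c * b powr k) has_real_derivative y) (at x) \<and> y \<le> 0"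
          using deriv_L[OF a(1) b0] by blast
      qed
    next
      case False
      hence F: "k1 \<le> k" by simp
      show ?thesis
      proof (rule DERIV_nonneg_imp_nondecreasing[OF F])
        fix x assume "k1 \<le> x" "x \<le> k"
        have "(a/b) powr x \<le> (a/b) powr k1" using r \<open>k1 \<le> x\<close> by (simp add: powr_mono')
        hence "?D x \<ge> 0" unfolding D using neg[of x] by (metis less_imp_le mult_nonpos_nonpos diff_le_0_iff_le)
        thus "\<exists>y. ((\<lambda>k. C * a powr k - c * b powr k) has_real_derivative y) (at x) \<and> y \<ge> 0"
          using deriv_L[OF a(1) b0] by blast
      qed
    qed
  qed
qed

lemma powr_at_top0: fixes r :: real assumes "0 < r" "r < 1"
  shows "((\<lambda>k. r powr k) \<longlongrightarrow> 0) at_top"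
proof -
  have "filterlim (\<lambda>k. ln r * k) at_bot at_top"
    by (rule filterlim_tendsto_neg_mult_at_bot[OF tendsto_const]) (use assms in \<open>auto intro: filterlim_ident\<close>)
  hence "((\<lambda>k. exp (ln r * k)) \<longlongrightarrow> 0) at_top"
    using exp_at_bot filterlim_compose by blast
  thus ?thesis using assms by (simp add: powr_def mult.commute)
qed

theorem corollary2:
  fixes Cp Tp :: "nat \<Rightarrow> real" and Cm Tm :: real and N :: nat
  assumes Cp_pos: "\<forall>i\<le>N. Cp i > 0"
    and Cm_pos: "Cm > 0"
    and Tp_pos: "\<forall>i\<le>N. 0 < Tp i"
    and Tp_lt: "\<forall>i\<le>N. Tp i < Tm"
    and Tm_lt1: "Tm < 1"
  shows "\<exists>Cmi :: nat \<Rightarrow> real.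
           (\<forall>i\<le>N. Cmi i > 0) \<and> (\<Sum>i\<le>N. Cmi i) = Cm \<and>
           (\<exists>k1 :: real. \<forall>i\<le>N.
               ((\<lambda>k. Cp i * Tp i powr k - Cmi i * Tm powr k) has_real_derivative 0) (at k1) \<and>
               (\<forall>k. Cp i * Tp i powr k1 - Cmi i * Tm powr k1 \<le> Cp i * Tp i powr k - Cmi i * Tm powr k)) \<and>
           (\<forall>k :: real. (Cp 0 * Tp 0 powr k - Cm * Tm powr k) + (\<Sum>i=1..N. Cp i * Tp i powr k)
               = (\<Sum>i\<le>N. Cp i * Tp i powr k - Cmi i * Tm powr k))"
proof -
  have Tm0: "Tm > 0" using Tp_pos Tp_lt by (meson dual_order.strict_trans le0)
  have lTm: "ln Tm < 0" using Tm0 Tm_lt1 by simp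
  define c where "c i = Cp i * ln (Tp i) / ln Tm" for i
  define r where "r i = Tp i / Tm" for i
  have c_pos: "c i > 0" if "i \<le> N" for i
  proof -
    have "Tp i < 1" using Tp_lt Tm_lt1 that by force
    hence "ln (Tp i) < 0" using Tp_pos that by simp
    thus ?thesis unfolding c_def using Cp_pos that lTm by (simp add: divide_neg_neg mult_pos_neg)
  qed
  have r01: "0 < r i" "r i < 1" if "i \<le> N" for i
    unfolding r_def using Tp_pos Tp_lt Tm0 that by auto
  define F where "F k = (\<Sum>i\<le>N. Cp i * ln (Tp i) * Tp i powr k / (ln Tm * Tm powr k))" for k
  have F_eq: "F k = (\<Sum>i\<le>N. c i * r i powr k)" for k
    unfolding F_def c_def r_def
  proof (rule sum.cong[OF refl])
    fix i assume "i \<in> {..N}"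
    hence "Tp i > 0" using Tp_pos by auto
    thus "Cp i * ln (Tp i) * Tp i powr k / (ln Tm * Tm powr k) = Cp i * ln (Tp i) / ln Tm * (Tp i / Tm) powr k"
      using Tm0 by (simp add: powr_divide)
  qed
  have cont: "continuous_on {a..b} F" for a b
    unfolding F_eq by (intro continuous_intros) (use r01 in force)+
  define ka where "ka = ln (Cm / c 0) / ln (r 0)"
  have "c 0 * r 0 powr ka = Cm"
  proof -
    have "ln (r 0) \<noteq> 0" using r01[of 0] by simp
    hence "r 0 powr ka = Cm / c 0" unfolding ka_def powr_def using r01[of 0] c_pos[of 0] Cm_pos by simp
    thus ?thesis using c_pos[of 0] by simp
  qed
  moreover have "F ka = c 0 * r 0 powr ka + (\<Sum>i\<in>{1..N}. c i * r i powr ka)"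
    unfolding F_eq by (simp add: atMost_atLeast0 sum.atLeast_Suc_atMost)
  moreover have "(\<Sum>i\<in>{1..N}. c i * r i powr ka) \<ge> 0"
    by (intro sum_nonneg) (use c_pos in \<open>auto intro!: mult_nonneg_nonneg simp: less_imp_le\<close>)
  ultimately have Fka: "Cm \<le> F ka" by linarith
  have "(F \<longlongrightarrow> (\<Sum>i\<le>N. c i * 0)) at_top"
    unfolding F_eq by (intro tendsto_sum tendsto_mult tendsto_const powr_at_top0) (use r01 in auto)
  hence "eventually (\<lambda>k. F k < Cm) at_top"
    using Cm_pos by (simp add: order_tendstoD)
  moreover have "eventually (\<lambda>k. ka \<le> k) at_top" by (rule eventually_ge_at_top)
  ultimately obtain kb where kb: "F kb < Cm" "ka \<le> kb"
    by (metis (mono_tags, lifting) eventually_conj_iff eventually_at_top_linorder order_refl)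
  obtain k1 where Fk1: "F k1 = Cm"
    using IVT2'[of F kb Cm ka, OF less_imp_le[OF kb(1)] Fka kb(2) cont] by blast
  define Cmi where "Cmi i = Cp i * ln (Tp i) * Tp i powr k1 / (ln Tm * Tm powr k1)" for i
  show ?thesis
  proof (intro exI[of _ Cmi] conjI)
    show "\<forall>i\<le>N. 0 < Cmi i"
    proof (intro allI impI)
      fix i assume i: "i \<le> N"
      have "Cmi i = c i * r i powr k1"
        unfolding Cmi_def c_def r_def using Tp_pos i Tm0 by (simp add: powr_divide)
      thus "0 < Cmi i" using c_pos[OF i] r01[OF i] by simp
    qed
    show "(\<Sum>i\<le>N. Cmi i) = Cm" using Fk1 unfolding F_def Cmi_def by simp
    show "\<exists>k1. \<forall>i\<le>N. ((\<lambda>k. Cp i * Tp i powr k - Cmi i * Tm powr k) has_real_derivative 0) (at k1) \<and>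
          (\<forall>k. Cp i * Tp i powr k1 - Cmi i * Tm powr k1 \<le> Cp i * Tp i powr k - Cmi i * Tm powr k)"
    proof (rule exI[of _ k1], intro allI impI, rule conjI)
      fix i assume i: "i \<le> N"
      have h: "Cp i > 0" "0 < Tp i" "Tp i < Tm" using i Cp_pos Tp_pos Tp_lt by auto
      show "((\<lambda>k. Cp i * Tp i powr k - Cmi i * Tm powr k) has_real_derivative 0) (at k1)"
        using L_min(1)[OF h Tm_lt1, of k1] by (simp add: Cmi_def)
      show "\<forall>k. Cp i * Tp i powr k1 - Cmi i * Tm powr k1 \<le> Cp i * Tp i powr k - Cmi i * Tm powr k"
        using L_min(2)[OF h Tm_lt1, of k1] by (simp add: Cmi_def)
    qed
    show "\<forall>k. Cp 0 * Tp 0 powr k - Cm * Tm powr k + (\<Sum>i = 1..N. Cp i * Tp i powr k) =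
        (\<Sum>i\<le>N. Cp i * Tp i powr k - Cmi i * Tm powr k)"
    proof
      fix k
      have "(\<Sum>i\<le>N. Cp i * Tp i powr k - Cmi i * Tm powr k)
          = (\<Sum>i\<le>N. Cp i * Tp i powr k) - (\<Sum>i\<le>N. Cmi i) * Tm powr k"
        by (simp add: sum_subtractf sum_distrib_right)
      also have "(\<Sum>i\<le>N. Cp i * Tp i powr k) = Cp 0 * Tp 0 powr k + (\<Sum>i = 1..N. Cp i * Tp i powr k)"
        by (simp add: atMost_atLeast0 sum.atLeast_Suc_atMost)
      finally show "Cp 0 * Tp 0 powr k - Cm * Tm powr k + (\<Sum>i = 1..N. Cp i * Tp i powr k) =
        (\<Sum>i\<le>N. Cp i * Tp i powr k - Cmi i * Tm powr k)"
        using \<open>(\<Sum>i\<le>N. Cmi i) = Cm\<close> by simp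
    qed
  qed
qed

end
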